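(* Let $n\ge 1$, $k=\lceil\log_2 n\rceil$, and let $G=(V,E)$ be the complete graph on $V=\{1,\ldots,n\}$. For $i\in V$ let $\mathbf i=(i_1,\ldots,i_k)\in\{0,1\}^k$ be the binary digits of $i-1$, i.e. $i-1=\sum_{t=1}^k i_t2^{t-1}$, and set $a_{ij}=(-1)^{\langle\mathbf i,\mathbf j\rangle}$ where $\langle\mathbf i,\mathbf j\rangle=\sum_{t=1}^k i_tj_t$. Then $\mu^+(V)\leqslant n^{3/2}/\sqrt2$ and $\mu^-(V)\geqslant -n^{3/2}/\sqrt2$.
   Context: For disjoint $U_1,U_2\subseteq V$, $\delta(U_1,U_2)$ is the set of edges with one endpoint in $U_1$ and one in $U_2$. $\mu^+(V)=\max\{\sum_{ij\in\delta(U_1,U_2)}a_{ij}:U_1\cup U_2=V,\ U_1\cap U_2=\emptyset\}$ and $\mu^-(V)$ is the corresponding minimum. *)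

theory Defs
  imports "HOL-Analysis.Analysis"
begin

definition nbits :: "nat \<Rightarrow> nat" where
  "nbits n = nat \<lceil>log 2 (real n)\<rceil>"

definition digit :: "nat \<Rightarrow> nat \<Rightarrow> nat" where
  "digit i t = ((i - 1) div 2 ^ (t - 1)) mod 2"

definition binip :: "nat \<Rightarrow> nat \<Rightarrow> nat \<Rightarrow> nat" where
  "binip k i j = (\<Sum>t=1..k. digit i t * digit j t)"

definition hadw :: "nat \<Rightarrow> nat \<Rightarrow> nat \<Rightarrow> real" where
  "hadw n i j = (-1) ^ binip (nbits n) i j"

definition complete_edges :: "nat set \<Rightarrow> nat set set" where
  "complete_edges V = {{i, j} | i j. i \<in> V \<and> j \<in> V \<and> i \<noteq> j}"

definition delta :: "nat set \<Rightarrow> nat set \<Rightarrow> nat set \<Rightarrow> nat set set" where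
  "delta V U1 U2 = {e \<in> complete_edges V. \<exists>i\<in>U1. \<exists>j\<in>U2. e = {i, j}}"

text \<open>Weight of an edge {i,j}; a_ij is symmetric.\<close>
definition edge_weight :: "nat \<Rightarrow> nat set \<Rightarrow> real" where
  "edge_weight n e = (THE w. \<exists>i j. e = {i, j} \<and> i \<noteq> j \<and> w = hadw n i j)"

definition cut_values :: "nat \<Rightarrow> real set" where
  "cut_values n = {(\<Sum>e\<in>delta {1..n} U1 U2. edge_weight n e) | U1 U2.
      U1 \<union> U2 = {1..n} \<and> U1 \<inter> U2 = {}}"

definition mu_plus :: "nat \<Rightarrow> real" where
  "mu_plus n = Max (cut_values n)"

definition mu_minus :: "nat \<Rightarrow> real" where
  "mu_minus n = Min (cut_values n)"

end

theory Submission
  imports Defs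
begin

primrec ip :: "nat \<Rightarrow> nat \<Rightarrow> nat \<Rightarrow> nat" where
  "ip 0 a b = 0"
| "ip (Suc k) a b = (a mod 2) * (b mod 2) + ip k (a div 2) (b div 2)"

lemma ip_sum: "ip k a b = (\<Sum>t<k. (a div 2^t mod 2) * (b div 2^t mod 2))"
  by (induction k arbitrary: a b) (simp_all del: sum.lessThan_Suc add: sum.lessThan_Suc_shift div_mult2_eq)

lemma binip_ip: "binip k i j = ip k (i-1) (j-1)"
  unfolding binip_def digit_def ip_sum
  by (induction k) (simp_all add: lessThan_Suc)

definition hh :: "nat \<Rightarrow> nat \<Rightarrow> nat \<Rightarrow> real" where
  "hh k a b = (-1) ^ ip k a b"

lemma sum_split2: "(\<Sum>j<2*M. f j) = (\<Sum>j<M. f (2*j) + f (2*j+1))" for f :: "nat \<Rightarrow> real"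
  by (induction M) (simp_all add: sum.distrib)

lemma hh_even: "hh (Suc k) a (2*j) = hh k (a div 2) j"
  by (simp add: hh_def)

lemma hh_odd: "hh (Suc k) a (2*j+1) = (-1)^(a mod 2) * hh k (a div 2) j"
  by (simp add: hh_def power_add)

lemma orth: "a < 2^k \<Longrightarrow> b < 2^k \<Longrightarrow>
  (\<Sum>j<2^k. hh k a j * hh k b j) = (if a = b then 2^k else 0)"
proof (induction k arbitrary: a b)
  case 0
  then show ?case by (simp add: hh_def)
next
  case (Suc k)
  have a2: "a div 2 < 2^k" "b div 2 < 2^k" using Suc.prems by auto
  have "(\<Sum>j<2^Suc k. hh (Suc k) a j * hh (Suc k) b j)
     = (\<Sum>j<2^k. hh (Suc k) a (2*j) * hh (Suc k) b (2*j) + hh (Suc k) a (2*j+1) * hh (Suc k) b (2*j+1))"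
    by (simp add: sum_split2)
  also have "\<dots> = (\<Sum>j<2^k. (1 + (-1)^(a mod 2) * (-1)^(b mod 2)) * (hh k (a div 2) j * hh k (b div 2) j))"
    unfolding hh_even hh_odd by (rule sum.cong) (simp_all add: algebra_simps)
  also have "\<dots> = (1 + (-1)^(a mod 2) * (-1)^(b mod 2)) * (if a div 2 = b div 2 then 2^k else 0)"
    by (simp add: sum_distrib_left[symmetric] Suc.IH[OF a2])
  also have "\<dots> = (if a = b then 2^Suc k else 0)"
  proof (cases "a mod 2 = b mod 2")
    case True
    then have "(1 + (-1)^(a mod 2) * (-1)^(b mod 2)) = (2::real)"
      by (simp flip: power_add)
    moreover have "a = b \<longleftrightarrow> a div 2 = b div 2" using True
      by (metis div_mult_mod_eq)
    ultimately show ?thesis by simp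
  next
    case False
    then have "(1 + (-1)^(a mod 2) * (-1)^(b mod 2)) = (0::real)"
      by (cases "a mod 2 = 0") (auto simp: mod2_eq_if split: if_splits)
    then show ?thesis using False by auto
  qed
  finally show ?case .
qed

lemma key:
  assumes A: "A \<subseteq> {..<2^k}" and B: "B \<subseteq> {..<2^k}"
  shows "(\<Sum>a\<in>A. \<Sum>b\<in>B. hh k a b)^2 \<le> real (card A) * card B * 2^k"
proof -
  have fA: "finite A" and fB: "finite B" using A B finite_subset by auto
  define c where "c b = (\<Sum>a\<in>A. hh k a b)" for b
  have "(\<Sum>a\<in>A. \<Sum>b\<in>B. hh k a b) = (\<Sum>b\<in>B. c b)"
    unfolding c_def by (rule sum.swap)
  moreover have "(\<Sum>b\<in>B. c b)^2 \<le> (\<Sum>b\<in>B. (c b)^2) * card B"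
    by (rule sum_squared_le_sum_of_squares)
  moreover have "(\<Sum>b\<in>B. (c b)^2) \<le> (\<Sum>b<2^k. (c b)^2)"
    by (rule sum_mono2) (use B in auto)
  moreover have "(\<Sum>b<2^k. (c b)^2) = (\<Sum>a\<in>A. \<Sum>a'\<in>A. \<Sum>b<2^k. hh k a b * hh k a' b)"
    unfolding c_def power2_eq_square sum_product
    by (subst sum.swap) (simp add: sum.swap[of _ "{..<2^k}"])
  moreover have "\<dots> = (\<Sum>a\<in>A. \<Sum>a'\<in>A. if a = a' then 2^k else 0)"
  proof -
    have "\<And>a a'. a\<in>A \<Longrightarrow> a'\<in>A \<Longrightarrow> (\<Sum>b<2^k. hh k a b * hh k a' b) = (if a=a' then 2^k else 0)"
      using A by (intro orth) auto
    then show ?thesis by simp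
  qed
  moreover have "\<dots> = real (card A) * 2^k"
    using fA by simp
  ultimately have "(\<Sum>a\<in>A. \<Sum>b\<in>B. hh k a b)^2 \<le> (real (card A) * 2^k) * card B"
    by (metis (no_types, lifting) mult_right_mono of_nat_0_le_iff order_trans)
  then show ?thesis by (simp add: algebra_simps)
qed

lemma hadw_sym: "hadw n i j = hadw n j i"
  unfolding hadw_def binip_def by (simp add: mult.commute)

lemma edge_weight_pair: "i \<noteq> j \<Longrightarrow> edge_weight n {i, j} = hadw n i j"
  unfolding edge_weight_def
  by (rule the_equality) (auto simp: doubleton_eq_iff hadw_sym)

lemma delta_eq:
  assumes "U1 \<subseteq> V" "U2 \<subseteq> V" "U1 \<inter> U2 = {}"
  shows "delta V U1 U2 = (\<lambda>(i,j). {i,j}) ` (U1 \<times> U2)"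
  using assms unfolding delta_def complete_edges_def by (auto 4 4)

lemma cut_sum:
  assumes "finite U1" "finite U2" "U1 \<subseteq> V" "U2 \<subseteq> V" "U1 \<inter> U2 = {}"
  shows "(\<Sum>e\<in>delta V U1 U2. edge_weight n e) = (\<Sum>i\<in>U1. \<Sum>j\<in>U2. hadw n i j)"
proof -
  have inj: "inj_on (\<lambda>(i,j). {i,j}) (U1 \<times> U2)"
    using assms(5) by (auto simp: inj_on_def doubleton_eq_iff)
  have "(\<Sum>e\<in>delta V U1 U2. edge_weight n e) = (\<Sum>p\<in>U1 \<times> U2. edge_weight n ((\<lambda>(i,j). {i,j}) p))"
    unfolding delta_eq[OF assms(3-5)] by (rule sum.reindex[OF inj, unfolded comp_def])
  also have "\<dots> = (\<Sum>(i,j)\<in>U1 \<times> U2. hadw n i j)"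
    by (rule sum.cong) (use assms(5) in \<open>auto intro!: edge_weight_pair\<close>)
  also have "\<dots> = (\<Sum>i\<in>U1. \<Sum>j\<in>U2. hadw n i j)"
    by (simp add: sum.cartesian_product)
  finally show ?thesis .
qed

lemma nbits_bounds:
  assumes "n \<ge> 1"
  shows "real n \<le> 2 ^ nbits n" "2 ^ nbits n \<le> 2 * real n"
proof -
  define L where "L = log 2 (real n)"
  have L0: "L \<ge> 0" using assms by (simp add: L_def)
  have kL: "real (nbits n) = real_of_int \<lceil>L\<rceil>"
    using L0 by (simp add: nbits_def L_def)
  have p: "(2::real) ^ nbits n = 2 powr real (nbits n)"
    by (simp add: powr_realpow)
  have nL: "real n = 2 powr L" using assms by (simp add: L_def)
  have "2 powr L \<le> 2 powr real (nbits n)"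
    using kL by (simp add: le_of_int_ceiling)
  then show "real n \<le> 2 ^ nbits n" using p nL by simp
  have "real (nbits n) \<le> L + 1" using kL by linarith
  then have "2 powr real (nbits n) \<le> 2 powr (L + 1)" by simp
  also have "\<dots> = 2 * real n" using nL by (simp add: powr_add)
  finally show "2 ^ nbits n \<le> 2 * real n" using p by simp
qed

lemma hadw_hh: "hadw n i j = hh (nbits n) (i-1) (j-1)"
  by (simp add: hadw_def hh_def binip_ip)

lemma cut_bound:
  assumes n: "n \<ge> 1" and U: "U1 \<union> U2 = {1..n}" "U1 \<inter> U2 = {}"
  shows "\<bar>\<Sum>e\<in>delta {1..n} U1 U2. edge_weight n e\<bar> \<le> real n powr (3/2) / sqrt 2"
proof -
  define k where "k = nbits n"
  have f: "finite U1" "finite U2" using U by (metis finite_Un finite_atLeastAtMost)+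
  have sub: "U1 \<subseteq> {1..n}" "U2 \<subseteq> {1..n}" using U by auto
  define A where "A = (\<lambda>i. i - 1) ` U1"
  define B where "B = (\<lambda>i. i - 1) ` U2"
  have inj1: "inj_on (\<lambda>i. i - 1) U1"
  proof (rule inj_onI)
    fix x y assume xy: "x \<in> U1" "y \<in> U1" "x - 1 = y - 1"
    have "x \<ge> 1" "y \<ge> 1" using xy(1,2) sub by auto
    then show "x = y" using xy(3) by linarith
  qed
  have inj2: "inj_on (\<lambda>i. i - 1) U2"
  proof (rule inj_onI)
    fix x y assume xy: "x \<in> U2" "y \<in> U2" "x - 1 = y - 1"
    have "x \<ge> 1" "y \<ge> 1" using xy(1,2) sub by auto
    then show "x = y" using xy(3) by linarith
  qed
  have Nn: "real n \<le> 2^k" "2^k \<le> 2 * real n" using nbits_bounds[OF n] by (auto simp: k_def)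
  have "real n \<le> real (2^k)" using Nn(1) by simp
  then have nk: "n \<le> 2^k" by (simp only: of_nat_le_iff)
  have AB: "A \<subseteq> {..<2^k}" "B \<subseteq> {..<2^k}" using sub nk unfolding A_def B_def by (auto simp: subset_iff)
  have "(\<Sum>e\<in>delta {1..n} U1 U2. edge_weight n e) = (\<Sum>i\<in>U1. \<Sum>j\<in>U2. hadw n i j)"
    using cut_sum[OF f sub U(2)] .
  also have "\<dots> = (\<Sum>i\<in>U1. \<Sum>j\<in>U2. hh k (i-1) (j-1))" by (simp add: hadw_hh k_def)
  also have "\<dots> = (\<Sum>a\<in>A. \<Sum>b\<in>B. hh k a b)"
    unfolding A_def B_def sum.reindex[OF inj1] sum.reindex[OF inj2] by simp
  finally have v: "(\<Sum>e\<in>delta {1..n} U1 U2. edge_weight n e) = (\<Sum>a\<in>A. \<Sum>b\<in>B. hh k a b)" .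
  have cA: "card A = card U1" "card B = card U2"
    unfolding A_def B_def using inj1 inj2 by (auto simp: card_image)
  have pq: "card U1 + card U2 = n" using card_Un_disjoint[OF f U(2)] U(1) by simp
  define p where "p = real (card U1)"
  define q where "q = real (card U2)"
  have pqn: "p + q = real n" using pq unfolding p_def q_def by (metis of_nat_add)
  have "(p + q)^2 - 4 * (p * q) = (p - q)^2" by (simp add: power2_eq_square algebra_simps)
  moreover have "0 \<le> (p - q)^2" by simp
  ultimately have "4 * (p * q) \<le> (p + q)^2" by linarith
  then have pq4: "p * q \<le> real n ^ 2 / 4" using pqn by simp
  have pq0: "0 \<le> p * q" by (simp add: p_def q_def)
  have "(\<Sum>a\<in>A. \<Sum>b\<in>B. hh k a b)^2 \<le> p * q * 2^k"
    using key[OF AB] cA by (simp add: p_def q_def)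
  also have "\<dots> \<le> (real n ^ 2 / 4) * (2 * real n)"
    using pq4 pq0 Nn(2) by (intro mult_mono) auto
  also have "\<dots> = (real n powr (3/2) / sqrt 2)^2"
  proof -
    have n0: "real n > 0" using n by simp
    have "(real n powr (3/2))^2 = real n powr (of_nat 2 * (3/2))"
      using n0 by (intro powr_power) simp
    also have "\<dots> = real n powr (real 3)" by simp
    also have "\<dots> = real n ^ 3" using n0 by (rule powr_realpow)
    finally show ?thesis by (simp add: power_divide power2_eq_square power3_eq_cube)
  qed
  finally have "\<bar>\<Sum>a\<in>A. \<Sum>b\<in>B. hh k a b\<bar>^2 \<le> (real n powr (3/2) / sqrt 2)^2" by simp
  then have "\<bar>\<Sum>a\<in>A. \<Sum>b\<in>B. hh k a b\<bar> \<le> real n powr (3/2) / sqrt 2"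
    by (rule power2_le_imp_le) simp
  then show ?thesis using v by simp
qed

theorem lemma2:
  fixes n :: nat
  assumes "n \<ge> 1"
  shows "mu_plus n \<le> real n powr (3/2) / sqrt 2 \<and> mu_minus n \<ge> - (real n powr (3/2) / sqrt 2)"
proof -
  let ?f = "\<lambda>U1. \<Sum>e\<in>delta {1..n} U1 ({1..n} - U1). edge_weight n e"
  have "cut_values n \<subseteq> ?f ` Pow {1..n}"
  proof
    fix v assume "v \<in> cut_values n"
    then obtain U1 U2 where "v = (\<Sum>e\<in>delta {1..n} U1 U2. edge_weight n e)"
      "U1 \<union> U2 = {1..n}" "U1 \<inter> U2 = {}" unfolding cut_values_def by blast
    moreover then have "U2 = {1..n} - U1" by blast
    ultimately show "v \<in> ?f ` Pow {1..n}" by blast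
  qed
  then have fin: "finite (cut_values n)" by (rule finite_subset) simp
  have ne: "cut_values n \<noteq> {}" unfolding cut_values_def by blast
  have bnd: "\<bar>v\<bar> \<le> real n powr (3/2) / sqrt 2" if "v \<in> cut_values n" for v
    using that cut_bound[OF assms] unfolding cut_values_def by blast
  have "mu_plus n \<in> cut_values n" "mu_minus n \<in> cut_values n"
    unfolding mu_plus_def mu_minus_def using fin ne by auto
  then show ?thesis using bnd by fastforce
qed

end
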